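(* Let $F:\mathbb{R}^n\rightrightarrows\mathbb{R}^n$ be a set-valued mapping with closed graph, and let $(\bar x,0)\in\mathrm{gph}\, F$. Assume that $F$ is semismooth$^*$ at $(\bar x,0)$ and that there are positive reals $\bar\delta$ and $\kappa$ such that for every $(x,y)\in\mathrm{gph}\, F$ with $\|(x,y)-(\bar x,0)\|\le\bar\delta$ there exists a pair of matrices $(A,B)\in\mathcal{A}_{\rm reg}F(x,y)$ with \[\|A^{-1}\|\,\|(A\,\vdots\,B)\|_F\le\kappa.\] Then $\bar x$ is an isolated solution of the inclusion $0\in F(x)$.
   Context: For a closed set $C\subset\mathbb{R}^p$ and $\bar z\in C$, the tangent cone is $T_C(\bar z)=\{w:\exists t_k\downarrow 0,\ w_k\to w \text{ with } \bar z+t_kw_k\in C\}$, and the regular normal cone is $\widehat N_C(\bar z)=\{z^*:\langle z^*,w\rangle\le 0\ \forall w\in T_C(\bar z)\}$. For a direction $w\in\mathbb{R}^p$, the directional limiting normal cone $N_C(\bar z;w)$ is the set of all $z^*$ for which there exist $t_k\downarrow 0$, $w_k\to w$ and $z_k^*\to z^*$ with $\bar z+t_kw_k\in C$ and $z_k^*\in\widehat N_C(\bar z+t_kw_k)$. The limiting normal cone is $N_C(\bar z)=N_C(\bar z;0)$. For $F:\mathbb{R}^n\rightrightarrows\mathbb{R}^m$ and $(\bar x,\bar y)\in\mathrm{gph}\, F$, the limiting coderivative is $D^*F(\bar x,\bar y)(v^* )=\{u^*:(u^*,-v^* )\in N_{\mathrm{gph}\, F}(\bar x,\bar y)\}$ and,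 for $(u,v)\in\mathbb{R}^n\times\mathbb{R}^m$, the directional limiting coderivative is $D^*F((\bar x,\bar y);(u,v))(v^* )=\{u^*:(u^*,-v^* )\in N_{\mathrm{gph}\, F}((\bar x,\bar y);(u,v))\}$. Graphs of coderivatives are written as $\mathrm{gph}\, D^*F(\bar x,\bar y)=\{(v^*,u^* ):u^*\in D^*F(\bar x,\bar y)(v^* )\}$ (and analogously for the directional one). $F$ is called semismooth$^*$ at $(\bar x,\bar y)\in\mathrm{gph}\, F$ if for all $(u,v)\in\mathbb{R}^n\times\mathbb{R}^m$ one has $\langle u^*,u\rangle=\langle v^*,v\rangle$ for all $(v^*,u^* )\in\mathrm{gph}\, D^*F((\bar x,\bar y);(u,v))$. For $F:\mathbb{R}^n\rightrightarrows\mathbb{R}^n$ and $(x,y)\in\mathrm{gph}\, F$, $\mathcal{A}F(x,y)$ denotes the set of all pairs $(A,B)$ of $n\times n$ matrices such that there exist $n$ elements $(y_i^*,x_i^* )\in\mathrm{gph}\, D^*F(x,y)$, $i=1,\dots,n$, with the $i$-th row of $A$ equal to $(x_i^* )^T$ and the $i$-th row of $B$ equal to $(y_i^* )^T$; and $\mathcal{A}_{\rm reg}F(x,y)=\{(A,B)\in\mathcal{A}F(x,y): A \text{ nonsingular}\}$. $\|(A\,\vdots\,B)\|_F$ is the Frobenius norm of the $n\times 2n$ matrix obtained by placing $A$ and $B$ side by side; $\|A^{-1}\|$ is the spectral norm. An isolated solution means there is a neighborhood of $\bar x$ containing no other solution. *)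

theory Defs
  imports "HOL-Analysis.Analysis"
begin

definition tangent_cone :: "'a::real_normed_vector set \<Rightarrow> 'a \<Rightarrow> 'a set" where
  "tangent_cone C z = {w. \<exists>t wk. (\<forall>k. t k > 0) \<and> t \<longlonglongrightarrow> 0 \<and> wk \<longlonglongrightarrow> w
       \<and> (\<forall>k. z + t k *\<^sub>R wk k \<in> C)}"

definition regular_normal_cone :: "'a::real_inner set \<Rightarrow> 'a \<Rightarrow> 'a set" where
  "regular_normal_cone C z = {zs. \<forall>w \<in> tangent_cone C z. inner zs w \<le> 0}"

definition dir_limiting_normal_cone :: "'a::real_inner set \<Rightarrow> 'a \<Rightarrow> 'a \<Rightarrow> 'a set" where
  "dir_limiting_normal_cone C z w = {zs. \<exists>t wk zk. (\<forall>k. t k > 0) \<and> t \<longlonglongrightarrow> 0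
       \<and> wk \<longlonglongrightarrow> w \<and> zk \<longlonglongrightarrow> zs
       \<and> (\<forall>k. z + t k *\<^sub>R wk k \<in> C \<and> zk k \<in> regular_normal_cone C (z + t k *\<^sub>R wk k))}"

definition limiting_normal_cone :: "'a::real_inner set \<Rightarrow> 'a \<Rightarrow> 'a set" where
  "limiting_normal_cone C z = dir_limiting_normal_cone C z 0"

definition gph :: "('a \<Rightarrow> 'b set) \<Rightarrow> ('a \<times> 'b) set" where
  "gph F = {(x, y). y \<in> F x}"

definition dir_coderiv ::
  "('a::real_inner \<Rightarrow> 'b::real_inner set) \<Rightarrow> 'a \<times> 'b \<Rightarrow> 'a \<times> 'b \<Rightarrow> 'b \<Rightarrow> 'a set" where
  "dir_coderiv F xy uv vs = {us. (us, - vs) \<in> dir_limiting_normal_cone (gph F) xy uv}"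

definition coderiv ::
  "('a::real_inner \<Rightarrow> 'b::real_inner set) \<Rightarrow> 'a \<times> 'b \<Rightarrow> 'b \<Rightarrow> 'a set" where
  "coderiv F xy vs = {us. (us, - vs) \<in> limiting_normal_cone (gph F) xy}"

definition gph_dir_coderiv ::
  "('a::real_inner \<Rightarrow> 'b::real_inner set) \<Rightarrow> 'a \<times> 'b \<Rightarrow> 'a \<times> 'b \<Rightarrow> ('b \<times> 'a) set" where
  "gph_dir_coderiv F xy uv = {(vs, us). us \<in> dir_coderiv F xy uv vs}"

definition gph_coderiv ::
  "('a::real_inner \<Rightarrow> 'b::real_inner set) \<Rightarrow> 'a \<times> 'b \<Rightarrow> ('b \<times> 'a) set" where
  "gph_coderiv F xy = {(vs, us). us \<in> coderiv F xy vs}"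

definition semismooth_star :: "('a::real_inner \<Rightarrow> 'b::real_inner set) \<Rightarrow> 'a \<times> 'b \<Rightarrow> bool" where
  "semismooth_star F xy \<longleftrightarrow> xy \<in> gph F \<and>
     (\<forall>u v. \<forall>(vs, us) \<in> gph_dir_coderiv F xy (u, v). inner us u = inner vs v)"

definition calA :: "(real^'n \<Rightarrow> (real^'n) set) \<Rightarrow> (real^'n) \<times> (real^'n)
     \<Rightarrow> ((real^'n^'n) \<times> (real^'n^'n)) set" where
  "calA F xy = {(A, B). \<exists>xs ys. (\<forall>i. (ys i, xs i) \<in> gph_coderiv F xy)
                 \<and> (\<forall>i. A $ i = xs i \<and> B $ i = ys i)}"

definition calA_reg :: "(real^'n \<Rightarrow> (real^'n) set) \<Rightarrow> (real^'n) \<times> (real^'n)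
     \<Rightarrow> ((real^'n^'n) \<times> (real^'n^'n)) set" where
  "calA_reg F xy = {(A, B). (A, B) \<in> calA F xy \<and> invertible A}"

definition frob_norm2 :: "real^'n^'n \<Rightarrow> real^'n^'n \<Rightarrow> real" where
  "frob_norm2 A B = sqrt (\<Sum>i\<in>UNIV. \<Sum>j\<in>UNIV. (A $ i $ j)\<^sup>2 + (B $ i $ j)\<^sup>2)"

definition spec_norm :: "real^'n^'n \<Rightarrow> real" where
  "spec_norm A = onorm (\<lambda>v. A *v v)"

end

theory Submission
  imports Defs
begin


lemma inv_left: fixes A :: "real^'n^'n" assumes "invertible A"
  shows "matrix_inv A ** A = mat 1"
  using someI_ex[OF assms[unfolded invertible_def]] unfolding matrix_inv_def by blast

lemma spec_lower: fixes A :: "real^'n^'n" assumes "invertible A"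
  shows "norm v \<le> spec_norm (matrix_inv A) * norm (A *v v)"
proof -
  have "v = matrix_inv A *v (A *v v)"
    by (simp add: matrix_vector_mul_assoc inv_left[OF assms])
  then have "norm v = norm (matrix_inv A *v (A *v v))" by simp
  also have "\<dots> \<le> spec_norm (matrix_inv A) * norm (A *v v)"
    unfolding spec_norm_def by (rule onorm) simp
  finally show ?thesis .
qed

lemma norm_le_frob: fixes A B :: "real^'n^'n"
  shows "norm A \<le> frob_norm2 A B"
proof -
  have "norm A = sqrt (\<Sum>i\<in>UNIV. \<Sum>j\<in>UNIV. (A $ i $ j)\<^sup>2)"
    by (simp add: norm_vec_def L2_set_def sum_nonneg)
  also have "\<dots> \<le> frob_norm2 A B" unfolding frob_norm2_def
    by (intro real_sqrt_le_mono sum_mono) auto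
  finally show ?thesis .
qed

lemma frob_sym: "frob_norm2 A B = frob_norm2 B A"
  unfolding frob_norm2_def by (simp add: add.commute)

lemma frob_scale: fixes A B :: "real^'n^'n" assumes "c \<ge> 0"
  shows "frob_norm2 (c *\<^sub>R A) (c *\<^sub>R B) = c * frob_norm2 A B"
proof -
  have "(\<Sum>i\<in>UNIV. \<Sum>j\<in>UNIV. ((c *\<^sub>R A) $ i $ j)\<^sup>2 + ((c *\<^sub>R B) $ i $ j)\<^sup>2)
     = c\<^sup>2 * (\<Sum>i\<in>UNIV. \<Sum>j\<in>UNIV. (A $ i $ j)\<^sup>2 + (B $ i $ j)\<^sup>2)"
    by (simp add: sum_distrib_left power_mult_distrib algebra_simps)
  then show ?thesis unfolding frob_norm2_def using assms by (simp add: real_sqrt_mult)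
qed

lemma mv_comp: fixes A :: "real^'n^'m" shows "(A *v x) $ i = inner (A $ i) x"
  by (simp add: matrix_vector_mult_def inner_vec_def mult.commute)

lemma diag:
  fixes C :: "'a::real_inner set"
  assumes tpos: "\<And>k. t k > 0" and t0: "t \<longlonglongrightarrow> 0" and dw: "d \<longlonglongrightarrow> w"
    and cpos: "\<And>k. c k > 0"
    and q: "\<And>k. q k \<in> dir_limiting_normal_cone C (z + t k *\<^sub>R d k) 0"
    and cq: "(\<lambda>k. c k *\<^sub>R q k) \<longlonglongrightarrow> zs"
  shows "zs \<in> dir_limiting_normal_cone C z w"
proof -
  have "\<exists>s p y. s > 0 \<and> norm (s *\<^sub>R p) < t k / Suc k \<and> norm (c k *\<^sub>R y - c k *\<^sub>R q k) < 1 / Suc k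
      \<and> z + t k *\<^sub>R d k + s *\<^sub>R p \<in> C \<and> y \<in> regular_normal_cone C (z + t k *\<^sub>R d k + s *\<^sub>R p)" for k
  proof -
    obtain s p y where s: "\<forall>j. s j > 0" "s \<longlonglongrightarrow> 0" "p \<longlonglongrightarrow> 0" "y \<longlonglongrightarrow> q k"
      and mem: "\<forall>j. z + t k *\<^sub>R d k + s j *\<^sub>R p j \<in> C \<and>
         y j \<in> regular_normal_cone C (z + t k *\<^sub>R d k + s j *\<^sub>R p j)"
      using q[of k] unfolding dir_limiting_normal_cone_def by blast
    have "(\<lambda>j. s j *\<^sub>R p j) \<longlonglongrightarrow> 0 *\<^sub>R 0" by (intro tendsto_scaleR s)
    then have "(\<lambda>j. norm (s j *\<^sub>R p j)) \<longlonglongrightarrow> 0" using tendsto_norm_zero by fastforce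
    moreover have "t k / Suc k > 0" using tpos[of k] by simp
    ultimately have e1: "eventually (\<lambda>j. norm (s j *\<^sub>R p j) < t k / Suc k) sequentially"
      by (rule order_tendstoD)
    have "(\<lambda>j. c k *\<^sub>R y j - c k *\<^sub>R q k) \<longlonglongrightarrow> c k *\<^sub>R q k - c k *\<^sub>R q k"
      by (intro tendsto_intros s)
    then have "(\<lambda>j. norm (c k *\<^sub>R y j - c k *\<^sub>R q k)) \<longlonglongrightarrow> 0"
      using tendsto_norm_zero_iff by fastforce
    then have e2: "eventually (\<lambda>j. norm (c k *\<^sub>R y j - c k *\<^sub>R q k) < 1 / Suc k) sequentially"
      by (simp add: order_tendstoD)
    obtain j where "norm (s j *\<^sub>R p j) < t k / Suc k" "norm (c k *\<^sub>R y j - c k *\<^sub>R q k) < 1 / Suc k"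
      using eventually_happens'[OF _ eventually_conj[OF e1 e2]] by auto
    then show ?thesis using s mem by blast
  qed
  then obtain s p y where sp: "\<And>k. s k > 0" "\<And>k. norm (s k *\<^sub>R p k) < t k / Suc k"
     "\<And>k. norm (c k *\<^sub>R y k - c k *\<^sub>R q k) < 1 / Suc k"
     "\<And>k. z + t k *\<^sub>R d k + s k *\<^sub>R p k \<in> C"
     "\<And>k. y k \<in> regular_normal_cone C (z + t k *\<^sub>R d k + s k *\<^sub>R p k)"
    by metis
  define W where "W k = d k + (s k / t k) *\<^sub>R p k" for k
  define Z where "Z k = c k *\<^sub>R y k" for k
  have pt: "z + t k *\<^sub>R W k = z + t k *\<^sub>R d k + s k *\<^sub>R p k" for k
    using tpos[of k] by (simp add: W_def algebra_simps)
  have lim1: "(\<lambda>k. 1 / real (Suc k)) \<longlonglongrightarrow> 0" by (rule LIMSEQ_inverse_real_of_nat[unfolded inverse_eq_divide])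
  have "(\<lambda>k. (s k / t k) *\<^sub>R p k) \<longlonglongrightarrow> 0"
  proof (rule tendsto_norm_zero_cancel, rule Lim_null_comparison[OF _ lim1], rule always_eventually, intro allI)
    fix k
    have "norm (norm ((s k / t k) *\<^sub>R p k)) = norm (s k *\<^sub>R p k) / t k"
      using tpos[of k] by simp
    also have "\<dots> \<le> 1 / real (Suc k)" using sp(2)[of k] tpos[of k] by (simp add: divide_simps)
    finally show "norm (norm ((s k / t k) *\<^sub>R p k)) \<le> 1 / real (Suc k)" .
  qed
  then have Wl: "W \<longlonglongrightarrow> w" unfolding W_def using tendsto_add[OF dw] by fastforce
  have "(\<lambda>k. Z k - c k *\<^sub>R q k) \<longlonglongrightarrow> 0"
  proof (rule tendsto_norm_zero_cancel, rule Lim_null_comparison[OF _ lim1], rule always_eventually, intro allI)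
    fix k show "norm (norm (Z k - c k *\<^sub>R q k)) \<le> 1 / real (Suc k)" using sp(3)[of k] by (simp add: Z_def)
  qed
  then have Zl: "Z \<longlonglongrightarrow> zs" using tendsto_add[OF _ cq] by fastforce
  have Zn: "Z k \<in> regular_normal_cone C (z + t k *\<^sub>R W k)" for k
    using sp(5)[of k] cpos[of k] unfolding Z_def pt regular_normal_cone_def
    by (auto simp: mult_nonneg_nonpos)
  have mem: "z + t k *\<^sub>R W k \<in> C" for k using sp(4)[of k] by (simp only: pt)
  have "(\<forall>k. t k > 0) \<and> t \<longlonglongrightarrow> 0 \<and> W \<longlonglongrightarrow> w \<and> Z \<longlonglongrightarrow> zs
       \<and> (\<forall>k. z + t k *\<^sub>R W k \<in> C \<and> Z k \<in> regular_normal_cone C (z + t k *\<^sub>R W k))"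
    using tpos t0 Wl Zl Zn mem by blast
  then show ?thesis unfolding dir_limiting_normal_cone_def by blast
qed



theorem corollary3p4:
  fixes F :: "real^'n \<Rightarrow> (real^'n) set" and xbar :: "real^'n"
    and delta kappa :: real
  assumes "closed (gph F)"
    and "(xbar, 0) \<in> gph F"
    and "semismooth_star F (xbar, 0)"
    and "delta > 0" and "kappa > 0"
    and "\<forall>x y. (x, y) \<in> gph F \<and> norm ((x, y) - (xbar, 0)) \<le> delta \<longrightarrow>
           (\<exists>A B. (A, B) \<in> calA_reg F (x, y) \<and>
                  spec_norm (matrix_inv A) * frob_norm2 A B \<le> kappa)"
  shows "\<exists>r>0. \<forall>x. dist x xbar < r \<and> 0 \<in> F x \<longrightarrow> x = xbar"
proof (rule ccontr)
  assume neg: "\<not> (\<exists>r>0. \<forall>x. dist x xbar < r \<and> 0 \<in> F x \<longrightarrow> x = xbar)"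
  note hyp = assms(6)
  have "\<exists>x. dist x xbar < delta / Suc k \<and> 0 \<in> F x \<and> x \<noteq> xbar" for k
  proof -
    have "delta / Suc k > 0" using assms(4) by simp
    then show ?thesis using neg by blast
  qed
  then obtain xs where xs: "\<And>k. dist (xs k) xbar < delta / Suc k" "\<And>k. 0 \<in> F (xs k)"
    "\<And>k. xs k \<noteq> xbar" by metis
  define t where "t k = norm (xs k - xbar)" for k
  define u where "u k = (1 / t k) *\<^sub>R (xs k - xbar)" for k
  have tpos: "t k > 0" for k using xs(3)[of k] by (simp add: t_def)
  have nu: "norm (u k) = 1" for k using tpos[of k] by (simp add: u_def t_def)
  have xsu: "(xbar, 0) + t k *\<^sub>R (u k, 0) = (xs k, (0::real^'n))" for k
    using tpos[of k] by (simp add: u_def)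
  have lim1: "(\<lambda>k. delta * (1 / real (Suc k))) \<longlonglongrightarrow> 0"
    using tendsto_mult[OF tendsto_const[of delta] LIMSEQ_inverse_real_of_nat[unfolded inverse_eq_divide]]
    by simp
  have t0: "t \<longlonglongrightarrow> 0"
  proof (rule Lim_null_comparison[OF _ lim1], rule always_eventually, intro allI)
    fix k show "norm (t k) \<le> delta * (1 / real (Suc k))"
      using xs(1)[of k] tpos[of k] by (simp add: t_def dist_norm)
  qed
  have near: "norm ((xs k, 0::real^'n) - (xbar, 0)) \<le> delta" for k
  proof -
    have "norm ((xs k, 0::real^'n) - (xbar, 0)) = dist (xs k) xbar"
      by (simp add: norm_Pair dist_norm)
    also have "\<dots> \<le> delta / Suc k" using xs(1)[of k] by simp
    also have "\<dots> \<le> delta" using assms(4) by (simp add: divide_simps)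
    finally show ?thesis .
  qed
  have gk: "(xs k, 0) \<in> gph F" for k using xs(2) by (simp add: gph_def)
  have "\<exists>A B. (A, B) \<in> calA_reg F (xs k, 0) \<and> spec_norm (matrix_inv A) * frob_norm2 A B \<le> kappa" for k
    using hyp gk near by blast
  then obtain AA BB where AB: "\<And>k. (AA k, BB k) \<in> calA_reg F (xs k, 0)"
    "\<And>k. spec_norm (matrix_inv (AA k)) * frob_norm2 (AA k) (BB k) \<le> kappa" by metis
  have inv: "invertible (AA k)" for k using AB(1)[of k] by (simp add: calA_reg_def)
  have nc: "(AA k $ i, - (BB k $ i)) \<in> dir_limiting_normal_cone (gph F) (xs k, 0) 0" for k i
  proof -
    obtain xs' ys' where h: "\<forall>i. (ys' i, xs' i) \<in> gph_coderiv F (xs k, 0)"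
      "\<forall>i. AA k $ i = xs' i \<and> BB k $ i = ys' i"
      using AB(1)[of k] unfolding calA_reg_def calA_def by blast
    have "(ys' i, xs' i) \<in> gph_coderiv F (xs k, 0)" using h(1) by blast
    then have "(xs' i, - ys' i) \<in> limiting_normal_cone (gph F) (xs k, 0)"
      unfolding gph_coderiv_def coderiv_def by simp
    then show ?thesis using h(2) unfolding limiting_normal_cone_def by simp
  qed
  define fr where "fr k = frob_norm2 (AA k) (BB k)" for k
  have low: "1 \<le> spec_norm (matrix_inv (AA k)) * norm (AA k *v u k)" for k
    using spec_lower[OF inv[of k], of "u k"] nu[of k] by simp
  have frpos: "fr k > 0" for k
  proof -
    have "fr k \<ge> 0" by (simp add: fr_def frob_norm2_def sum_nonneg)
    moreover have "fr k \<noteq> 0"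
    proof
      assume "fr k = 0"
      then have "norm (AA k) \<le> 0" using norm_le_frob[of "AA k" "BB k"] by (simp add: fr_def)
      then have "AA k = 0" by simp
      then show False using low[of k] by simp
    qed
    ultimately show ?thesis by simp
  qed
  have bnd: "fr k \<le> kappa * norm (AA k *v u k)" for k
  proof -
    have "fr k = fr k * 1" by simp
    also have "\<dots> \<le> fr k * (spec_norm (matrix_inv (AA k)) * norm (AA k *v u k))"
      using low[of k] frpos[of k] by (intro mult_left_mono) auto
    also have "\<dots> = (spec_norm (matrix_inv (AA k)) * fr k) * norm (AA k *v u k)" by simp
    also have "\<dots> \<le> kappa * norm (AA k *v u k)"
      using AB(2)[of k] by (intro mult_right_mono) (auto simp: fr_def)
    finally show ?thesis .
  qed
  define c where "c k = 1 / fr k" for k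
  have cpos: "c k > 0" for k using frpos[of k] by (simp add: c_def)
  define Ak where "Ak k = c k *\<^sub>R AA k" for k
  define Bk where "Bk k = c k *\<^sub>R BB k" for k
  have lowk: "1 / kappa \<le> norm (Ak k *v u k)" for k
  proof -
    have "Ak k *v u k = c k *\<^sub>R (AA k *v u k)"
      unfolding Ak_def by (rule scaleR_matrix_vector_assoc[symmetric])
    then have "norm (Ak k *v u k) = c k * norm (AA k *v u k)"
      using cpos[of k] by simp
    moreover have "1 / kappa \<le> c k * norm (AA k *v u k)"
    proof -
      have "fr k / kappa \<le> norm (AA k *v u k)"
        using bnd[of k] assms(5) by (simp add: pos_divide_le_eq mult.commute)
      then have "(fr k / kappa) / fr k \<le> norm (AA k *v u k) / fr k"
        using frpos[of k] by (intro divide_right_mono) auto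
      moreover have "(fr k / kappa) / fr k = 1 / kappa" using frpos[of k] by simp
      ultimately show ?thesis by (simp add: c_def)
    qed
    ultimately show ?thesis by simp
  qed
  have frk: "frob_norm2 (Ak k) (Bk k) = 1" for k
    using frob_scale[of "c k" "AA k" "BB k"] cpos[of k] frpos[of k]
    by (simp add: Ak_def Bk_def c_def fr_def)
  define f where "f k = (u k, Ak k, Bk k)" for k
  have "norm (f k) \<le> 3" for k
  proof -
    have n1: "norm (f k) \<le> norm (u k) + norm (Ak k, Bk k)"
      unfolding f_def by (rule norm_Pair_le)
    have n2: "norm (Ak k, Bk k) \<le> norm (Ak k) + norm (Bk k)"
      by (rule norm_Pair_le)
    have "norm (f k) \<le> norm (u k) + (norm (Ak k) + norm (Bk k))"
      using n1 n2 by linarith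
    moreover have "norm (Ak k) \<le> 1" using norm_le_frob[of "Ak k" "Bk k"] frk[of k] by simp
    moreover have "norm (Bk k) \<le> 1" using norm_le_frob[of "Bk k" "Ak k"] frk[of k] frob_sym by metis
    ultimately show ?thesis using nu[of k] by simp
  qed
  then have "\<forall>x\<in>range f. norm x \<le> 3" by blast
  then have "bounded (range f)" unfolding bounded_iff by (rule exI)
  then obtain l r where r: "strict_mono r" "(f \<circ> r) \<longlonglongrightarrow> l"
    using bounded_imp_convergent_subsequence by blast
  obtain u0 A0 B0 where l: "l = (u0, A0, B0)" by (cases l) auto
  have ul: "(\<lambda>k. u (r k)) \<longlonglongrightarrow> u0" using tendsto_fst[OF r(2)] by (simp add: l f_def o_def)
  have Al: "(\<lambda>k. Ak (r k)) \<longlonglongrightarrow> A0" using tendsto_fst[OF tendsto_snd[OF r(2)]]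
    by (simp add: l f_def o_def)
  have Bl: "(\<lambda>k. Bk (r k)) \<longlonglongrightarrow> B0" using tendsto_snd[OF tendsto_snd[OF r(2)]]
    by (simp add: l f_def o_def)
  have zero: "inner (A0 $ i) u0 = 0" for i
  proof -
    have "(A0 $ i, - (B0 $ i)) \<in> dir_limiting_normal_cone (gph F) (xbar, 0) (u0, 0)"
    proof (rule diag[where t="\<lambda>k. t (r k)" and d="\<lambda>k. (u (r k), 0)" and c="\<lambda>k. c (r k)"
          and q="\<lambda>k. (AA (r k) $ i, - (BB (r k) $ i))"])
      show "\<And>k. 0 < t (r k)" using tpos by simp
      show "(\<lambda>k. t (r k)) \<longlonglongrightarrow> 0" using LIMSEQ_subseq_LIMSEQ[OF t0 r(1)] by (simp add: o_def)
      show "(\<lambda>k. (u (r k), 0::real^'n)) \<longlonglongrightarrow> (u0, 0)" by (intro tendsto_Pair ul tendsto_const)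
      show "\<And>k. 0 < c (r k)" using cpos by simp
      show "\<And>k. (AA (r k) $ i, - (BB (r k) $ i)) \<in> dir_limiting_normal_cone (gph F)
          ((xbar, 0) + t (r k) *\<^sub>R (u (r k), 0)) 0" using nc by (simp only: xsu)
      have "(\<lambda>k. (Ak (r k) $ i, - (Bk (r k) $ i))) \<longlonglongrightarrow> (A0 $ i, - (B0 $ i))"
        by (intro tendsto_Pair tendsto_minus tendsto_vec_nth Al Bl)
      then show "(\<lambda>k. c (r k) *\<^sub>R (AA (r k) $ i, - (BB (r k) $ i))) \<longlonglongrightarrow> (A0 $ i, - (B0 $ i))"
        by (simp add: Ak_def Bk_def)
    qed
    then have "(B0 $ i, A0 $ i) \<in> gph_dir_coderiv F (xbar, 0) (u0, 0)"
      by (simp add: gph_dir_coderiv_def dir_coderiv_def)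
    moreover have "\<forall>(vs, us)\<in>gph_dir_coderiv F (xbar, 0) (u0, 0). inner us u0 = inner vs 0"
      using assms(3) unfolding semismooth_star_def by blast
    ultimately have "inner (A0 $ i) u0 = inner (B0 $ i) 0" by blast
    then show ?thesis by simp
  qed
  have "(\<lambda>k. Ak (r k) *v u (r k)) \<longlonglongrightarrow> 0"
  proof (rule vec_tendstoI)
    fix i
    have "(\<lambda>k. inner (Ak (r k) $ i) (u (r k))) \<longlonglongrightarrow> inner (A0 $ i) u0"
      by (intro tendsto_inner tendsto_vec_nth Al ul)
    then show "(\<lambda>k. (Ak (r k) *v u (r k)) $ i) \<longlonglongrightarrow> 0 $ i" by (simp add: mv_comp zero)
  qed
  then have "(\<lambda>k. norm (Ak (r k) *v u (r k))) \<longlonglongrightarrow> 0" by (simp add: tendsto_norm_zero_iff)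
  then have "eventually (\<lambda>k. norm (Ak (r k) *v u (r k)) < 1 / kappa) sequentially"
    using assms(5) by (simp add: order_tendstoD)
  then obtain k where "norm (Ak (r k) *v u (r k)) < 1 / kappa" using eventually_happens'[OF sequentially_bot] by blast
  then show False using lowk[of "r k"] by simp
qed

end
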